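(* Let $n\ge 2$ and let $v_1,\dots,v_N\in S^{n-1}$ be unit vectors that are not contained in any closed hemisphere and are in general position in dimension $n$. Let $(P_i)$ be a sequence of polytopes in $\mathcal P(v_1,\dots,v_N)$. If the outer radii $R_i$ of $P_i$ are not uniformly bounded in $i$, then the inner radii $r_i$ of $P_i$ are not uniformly bounded in $i$ either.
   Context: Unit vectors are in general position in dimension $n$ if any $n$ of them are linearly independent. $\mathcal P(v_1,\dots,v_N)$ is the set of polytopes in $\mathbb R^n$ (with nonempty interior) all of whose facet outer unit normals belong to $\{v_1,\dots,v_N\}$; equivalently sets $\{x: x\cdot v_j\le z_j,\ j=1,\dots,N\}$ with nonempty interior. The outer radius of a convex body is the smallest radius of a Euclidean ball containing it; the inner radius is the largest radius of a Euclidean ball contained in it. *)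

theory Defs
  imports "HOL-Analysis.Analysis"
begin

definition general_position :: "nat \<Rightarrow> (nat \<Rightarrow> 'a::euclidean_space) \<Rightarrow> bool" where
  "general_position N v \<longleftrightarrow>
     (\<forall>I. I \<subseteq> {..<N} \<and> card I = DIM('a) \<longrightarrow> inj_on v I \<and> independent (v ` I))"

definition not_in_closed_hemisphere :: "nat \<Rightarrow> (nat \<Rightarrow> 'a::euclidean_space) \<Rightarrow> bool" where
  "not_in_closed_hemisphere N v \<longleftrightarrow>
     \<not> (\<exists>u. norm u = 1 \<and> (\<forall>j<N. v j \<bullet> u \<ge> 0))"

definition polytope_class :: "nat \<Rightarrow> (nat \<Rightarrow> 'a::euclidean_space) \<Rightarrow> 'a set set" where
  "polytope_class N v =
     {P. interior P \<noteq> {} \<and> (\<exists>z::nat \<Rightarrow> real. P = {x. \<forall>j<N. x \<bullet> v j \<le> z j})}"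

definition outer_radius :: "'a::euclidean_space set \<Rightarrow> real" where
  "outer_radius K = Inf {r. \<exists>c. K \<subseteq> cball c r}"

definition inner_radius :: "'a::euclidean_space set \<Rightarrow> real" where
  "inner_radius K = Sup {r. r \<ge> 0 \<and> (\<exists>c. cball c r \<subseteq> K)}"

end

theory Submission
  imports Defs
begin


lemma sphere_min:
  fixes g :: "'a::euclidean_space \<Rightarrow> real"
  assumes "continuous_on (sphere 0 1) g" "\<And>u. norm u = 1 \<Longrightarrow> g u > 0"
  shows "\<exists>m>0. \<forall>u. norm u = 1 \<longrightarrow> g u \<ge> m"
proof -
  have ne: "sphere (0::'a) 1 \<noteq> {}" by simp
  obtain x where x: "x \<in> sphere 0 1" "\<forall>y\<in>sphere 0 1. g x \<le> g y"
    using continuous_attains_inf[OF compact_sphere ne assms(1)] by blast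
  have n1: "norm x = 1" using x(1) by simp
  have "g x > 0" using assms(2)[OF n1] .
  moreover have "\<forall>u. norm u = 1 \<longrightarrow> g u \<ge> g x"
    using x(2) by simp
  ultimately show ?thesis by blast
qed

lemma N_ge:
  fixes v :: "nat \<Rightarrow> 'a::euclidean_space"
  assumes "not_in_closed_hemisphere N v"
  shows "DIM('a) \<le> N"
proof (rule ccontr)
  assume "\<not> DIM('a) \<le> N"
  hence "dim (v ` {..<N}) < DIM('a)"
    using dim_le_card'[of "v ` {..<N}"] card_image_le[of "{..<N}" v] by simp
  then obtain x where x: "x \<noteq> 0" "\<And>y. y \<in> span (v ` {..<N}) \<Longrightarrow> orthogonal x y"
    using orthogonal_to_subspace_exists by blast
  define u where "u = x /\<^sub>R norm x"
  have "norm u = 1" using x by (simp add: u_def)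
  moreover have "\<forall>j<N. v j \<bullet> u \<ge> 0"
  proof (intro allI impI)
    fix j assume "j < N"
    hence "v j \<in> span (v ` {..<N})" by (intro span_base) simp
    hence "orthogonal x (v j)" using x(2) by blast
    hence "v j \<bullet> x = 0" by (simp add: orthogonal_def inner_commute)
    thus "v j \<bullet> u \<ge> 0" by (simp add: u_def)
  qed
  ultimately show False using assms unfolding not_in_closed_hemisphere_def by blast
qed



lemma eta_exists:
  fixes v :: "nat \<Rightarrow> 'a::euclidean_space"
  assumes "not_in_closed_hemisphere N v"
  shows "\<exists>\<eta>>0. \<forall>u. norm u = 1 \<longrightarrow> (\<exists>j<N. v j \<bullet> u \<ge> \<eta>)"
proof -
  define g where "g u = (\<Sum>j<N. max 0 (v j \<bullet> u))" for u
  have pos: "\<exists>j<N. v j \<bullet> u > 0" if "norm u = 1" for u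
  proof (rule ccontr)
    assume "\<not> ?thesis"
    hence "\<forall>j<N. v j \<bullet> (-u) \<ge> 0" using leD by force
    moreover have "norm (-u) = 1" using that by simp
    ultimately show False using assms unfolding not_in_closed_hemisphere_def by blast
  qed
  have "continuous_on (sphere 0 1) g" unfolding g_def
    by (intro continuous_intros)
  moreover have "g u > 0" if nu: "norm u = 1" for u
  proof -
    obtain j where j: "j < N" "v j \<bullet> u > 0" using pos[OF nu] by blast
    have "max 0 (v j \<bullet> u) \<le> g u" unfolding g_def
      by (rule member_le_sum) (use j in auto)
    thus ?thesis using j by linarith
  qed
  ultimately obtain m where m: "m > 0" "\<And>u. norm u = 1 \<Longrightarrow> g u \<ge> m"
    using sphere_min[of g] by blast
  obtain u0 :: 'a where "norm u0 = 1" using vector_choose_size[of 1] by auto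
  then obtain j0 where "j0 < N" using pos by blast
  hence N0: "N > 0" by simp
  show ?thesis
  proof (intro exI[of _ "m / N"] conjI allI impI)
    show "m / N > 0" using m N0 by simp
    fix u :: 'a assume u: "norm u = 1"
    show "\<exists>j<N. m / N \<le> v j \<bullet> u"
    proof (rule ccontr)
      assume "\<not> ?thesis"
      hence lt: "\<forall>j<N. max 0 (v j \<bullet> u) < m / N" using m N0 by (auto simp: not_le)
      have "g u < (\<Sum>j<N. m / N)" unfolding g_def
        by (rule sum_strict_mono) (use lt N0 in auto)
      also have "\<dots> = m" using N0 by simp
      finally show False using m(2)[OF u] by linarith
    qed
  qed
qed

lemma poly_bounded:
  fixes v :: "nat \<Rightarrow> 'a::euclidean_space"
  assumes "not_in_closed_hemisphere N v"
  shows "bounded {x. \<forall>j<N. x \<bullet> v j \<le> z j}"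
proof -
  obtain \<eta> where e: "\<eta> > 0" "\<And>u. norm u = 1 \<Longrightarrow> \<exists>j<N. v j \<bullet> u \<ge> \<eta>"
    using eta_exists[OF assms] by blast
  define Z where "Z = (\<Sum>j<N. \<bar>z j\<bar>)"
  have "norm x \<le> Z / \<eta>" if x: "\<forall>j<N. x \<bullet> v j \<le> z j" for x
  proof (cases "x = 0")
    case True
    have "Z \<ge> 0" unfolding Z_def by (intro sum_nonneg) auto
    thus ?thesis using True e by simp
  next
    case False
    define u where "u = x /\<^sub>R norm x"
    have "norm u = 1" using False by (simp add: u_def)
    then obtain j where j: "j < N" "v j \<bullet> u \<ge> \<eta>" using e by blast
    have "v j \<bullet> x = norm x * (v j \<bullet> u)" using False by (simp add: u_def)
    hence "norm x * \<eta> \<le> v j \<bullet> x" using j by (simp add: mult_left_mono)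
    also have "\<dots> \<le> z j" using x j by (simp add: inner_commute)
    also have "\<dots> \<le> \<bar>z j\<bar>" by simp
    also have "\<dots> \<le> Z" unfolding Z_def by (rule member_le_sum) (use j in auto)
    finally show ?thesis using e by (simp add: field_simps)
  qed
  thus ?thesis unfolding bounded_iff by blast
qed



lemma avg_exists:
  fixes f :: "nat \<Rightarrow> real"
  assumes "finite I" "I \<noteq> {}" "(\<Sum>j\<in>I. f j) \<ge> m"
  shows "\<exists>j\<in>I. f j \<ge> m / card I"
proof (rule ccontr)
  assume "\<not> ?thesis"
  hence lt: "\<forall>j\<in>I. f j < m / card I" by (auto simp: not_le)
  have "(\<Sum>j\<in>I. f j) < (\<Sum>j\<in>I. m / card I)"
    by (rule sum_strict_mono) (use lt assms in auto)
  also have "\<dots> = m" using assms by simp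
  finally show False using assms by linarith
qed

lemma delta_I:
  fixes v :: "nat \<Rightarrow> 'a::euclidean_space"
  assumes ind: "independent (v ` I)" and inj: "inj_on v I" and c: "card I = DIM('a)"
  shows "\<exists>\<delta>>0. \<forall>u. norm u = 1 \<longrightarrow> (\<exists>j\<in>I. \<bar>v j \<bullet> u\<bar> \<ge> \<delta>)"
proof -
  have fin: "finite I" and ne: "I \<noteq> {}" using c card_gt_0_iff[of I] DIM_positive by auto
  define g where "g u = (\<Sum>j\<in>I. \<bar>v j \<bullet> u\<bar>)" for u
  have "continuous_on (sphere 0 1) g" unfolding g_def
    by (intro continuous_intros)
  moreover have "g u > 0" if nu: "norm u = 1" for u
  proof (rule ccontr)
    assume "\<not> g u > 0"
    moreover have "g u \<ge> 0" unfolding g_def by (intro sum_nonneg) auto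
    ultimately have "g u = 0" by linarith
    hence z: "\<forall>j\<in>I. v j \<bullet> u = 0" unfolding g_def using fin
      by (subst (asm) sum_nonneg_eq_0_iff) auto
    have "card (v ` I) = DIM('a)" using card_image[OF inj] c by simp
    hence "(UNIV::'a set) \<subseteq> span (v ` I)"
      by (intro card_ge_dim_independent[OF _ ind]) (auto simp: dim_UNIV)
    hence "u \<in> span (v ` I)" by blast
    moreover have "\<And>y. y \<in> v ` I \<Longrightarrow> orthogonal u y"
      using z by (auto simp: orthogonal_def inner_commute)
    ultimately have "orthogonal u u" by (rule orthogonal_to_span)
    hence "u = 0" by (simp add: orthogonal_def)
    thus False using nu by simp
  qed
  ultimately obtain m where m: "m > 0" "\<And>u. norm u = 1 \<Longrightarrow> g u \<ge> m"
    using sphere_min[of g] by blast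
  show ?thesis
  proof (intro exI[of _ "m / card I"] conjI allI impI)
    show "m / card I > 0" using m fin ne by (simp add: card_gt_0_iff)
    fix u :: 'a assume u: "norm u = 1"
    show "\<exists>j\<in>I. m / card I \<le> \<bar>v j \<bullet> u\<bar>"
      using avg_exists[OF fin ne, of m "\<lambda>j. \<bar>v j \<bullet> u\<bar>"] m(2)[OF u] unfolding g_def by blast
  qed
qed

lemma delta_exists:
  fixes v :: "nat \<Rightarrow> 'a::euclidean_space"
  assumes gp: "general_position N v"
  shows "\<exists>\<delta>>0. \<forall>u. norm u = 1 \<longrightarrow>
     (\<forall>I. I \<subseteq> {..<N} \<and> card I = DIM('a) \<longrightarrow> (\<exists>j\<in>I. \<bar>v j \<bullet> u\<bar> \<ge> \<delta>))"
proof -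
  define Q where "Q \<delta> I \<longleftrightarrow> (\<forall>u. norm u = 1 \<longrightarrow> (\<exists>j\<in>I. \<bar>v j \<bullet> u\<bar> \<ge> \<delta>))" for \<delta> I
  define II where "II = {I. I \<subseteq> {..<N} \<and> card I = DIM('a)}"
  have finII: "finite II" unfolding II_def
    by (rule finite_subset[of _ "Pow {..<N}"]) auto
  have "\<forall>I\<in>II. eventually (\<lambda>\<delta>. Q \<delta> I) (at_right (0::real))"
  proof
    fix I assume "I \<in> II"
    hence "inj_on v I \<and> independent (v ` I)" "card I = DIM('a)"
      using gp unfolding II_def general_position_def by auto
    then obtain d where d: "d > 0" "\<forall>u. norm u = 1 \<longrightarrow> (\<exists>j\<in>I. \<bar>v j \<bullet> u\<bar> \<ge> d)"
      using delta_I[of v I] by blast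
    have "\<forall>y>0. y < d \<longrightarrow> Q y I" unfolding Q_def using d(2) by force
    thus "eventually (\<lambda>\<delta>. Q \<delta> I) (at_right (0::real))"
      unfolding eventually_at_right_field using d(1) by blast
  qed
  hence "eventually (\<lambda>\<delta>. \<forall>I\<in>II. Q \<delta> I) (at_right (0::real))"
    by (rule eventually_ball_finite[OF finII])
  then obtain b where b: "b > 0" "\<forall>y>0. y < b \<longrightarrow> (\<forall>I\<in>II. Q y I)"
    unfolding eventually_at_right_field by blast
  hence "\<forall>I\<in>II. Q (b/2) I" by simp
  thus ?thesis using b(1) unfolding Q_def II_def
    by (intro exI[of _ "b/2"]) auto
qed



lemma w_J:
  fixes v :: "nat \<Rightarrow> 'a::euclidean_space"
  assumes gp: "general_position N v" and NN: "DIM('a) \<le> N"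
    and J: "J \<subseteq> {..<N}" "card J < DIM('a)"
  shows "\<exists>w. \<forall>j\<in>J. w \<bullet> v j = -1"
proof -
  have finJ: "finite J" using J(1) finite_subset by blast
  have "card ({..<N} - J) = N - card J" using J(1) finJ by (simp add: card_Diff_subset)
  hence "DIM('a) - card J \<le> card ({..<N} - J)" using NN by simp
  then obtain K where K: "K \<subseteq> {..<N} - J" "card K = DIM('a) - card J" "finite K"
    by (rule obtain_subset_with_card_n)
  define I where "I = J \<union> K"
  have "card I = card J + card K" unfolding I_def
    by (rule card_Un_disjoint) (use finJ K in auto)
  hence cI: "card I = DIM('a)" using K J by simp
  have IN: "I \<subseteq> {..<N}" using J K unfolding I_def by auto
  have ind: "independent (v ` I)" using gp cI IN unfolding general_position_def by blast
  obtain g :: "'a \<Rightarrow> real" where g: "linear g" "\<forall>x\<in>v ` I. g x = -1"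
    using real_vector.linear_independent_extend[OF ind, of "\<lambda>_. -1"] by blast
  define w where "w = adjoint g 1"
  have "\<forall>j\<in>J. w \<bullet> v j = -1"
  proof
    fix j assume "j \<in> J"
    hence "v j \<in> v ` I" unfolding I_def by auto
    have "v j \<bullet> w = g (v j) \<bullet> 1" unfolding w_def by (rule adjoint_works[OF g(1)])
    thus "w \<bullet> v j = -1" using g(2) \<open>v j \<in> v ` I\<close> by (simp add: inner_commute)
  qed
  thus ?thesis by blast
qed

lemma M_exists:
  fixes v :: "nat \<Rightarrow> 'a::euclidean_space"
  assumes gp: "general_position N v" and NN: "DIM('a) \<le> N"
  shows "\<exists>M\<ge>1. \<forall>J. J \<subseteq> {..<N} \<and> card J < DIM('a) \<longrightarrow>
            (\<exists>w. norm w \<le> M \<and> (\<forall>j\<in>J. w \<bullet> v j = -1))"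
proof -
  define JJ where "JJ = {J. J \<subseteq> {..<N} \<and> card J < DIM('a)}"
  have finJJ: "finite JJ" unfolding JJ_def
    by (rule finite_subset[of _ "Pow {..<N}"]) auto
  have "\<forall>J\<in>JJ. eventually (\<lambda>M. \<exists>w. norm w \<le> M \<and> (\<forall>j\<in>J. w \<bullet> v j = -1)) at_top"
  proof
    fix J assume "J \<in> JJ"
    then obtain w where w: "\<forall>j\<in>J. w \<bullet> v j = -1"
      using w_J[OF gp NN] unfolding JJ_def by blast
    show "eventually (\<lambda>M. \<exists>w. norm w \<le> M \<and> (\<forall>j\<in>J. w \<bullet> v j = -1)) at_top"
      using eventually_ge_at_top[of "norm w"] by eventually_elim (use w in blast)
  qed
  hence "eventually (\<lambda>M. \<forall>J\<in>JJ. \<exists>w. norm w \<le> M \<and> (\<forall>j\<in>J. w \<bullet> v j = -1)) at_top"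
    by (rule eventually_ball_finite[OF finJJ])
  moreover have "eventually (\<lambda>M. M \<ge> (1::real)) at_top" by (rule eventually_ge_at_top)
  ultimately have "eventually (\<lambda>M. M \<ge> 1 \<and> (\<forall>J\<in>JJ. \<exists>w. norm w \<le> M \<and> (\<forall>j\<in>J. w \<bullet> v j = -1))) at_top"
    by eventually_elim blast
  then obtain M where "M \<ge> 1 \<and> (\<forall>J\<in>JJ. \<exists>w. norm w \<le> M \<and> (\<forall>j\<in>J. w \<bullet> v j = -1))"
    unfolding eventually_at_top_linorder by blast
  thus ?thesis unfolding JJ_def by blast
qed



lemma inner_bdd:
  fixes P :: "'a::euclidean_space set"
  assumes "bounded P"
  shows "bdd_above {r. r \<ge> 0 \<and> (\<exists>c. cball c r \<subseteq> P)}"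
proof -
  obtain B where B: "\<forall>x\<in>P. norm x \<le> B" using assms unfolding bounded_iff by blast
  obtain e :: 'a where e: "norm e = 1" using vector_choose_size[of 1] by auto
  have "r \<le> 2 * B" if "r \<ge> 0" "cball c r \<subseteq> P" for r c
  proof -
    have "c \<in> P" using that by auto
    moreover have "c + r *\<^sub>R e \<in> P" using that e by (auto simp: dist_norm)
    ultimately have "norm c \<le> B" "norm (c + r *\<^sub>R e) \<le> B" using B by auto
    moreover have "r = norm ((c + r *\<^sub>R e) - c)" using e that by simp
    moreover have "norm ((c + r *\<^sub>R e) - c) \<le> norm (c + r *\<^sub>R e) + norm c"
      by (rule norm_triangle_ineq4)
    ultimately show ?thesis by linarith
  qed
  thus ?thesis unfolding bdd_above_def by blast
qed

lemma aux_mid: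
  fixes pm pa pb zz :: real
  assumes "pm = (pa + pb) / 2" "pa \<le> zz" "pb \<le> zz"
  shows "pm + \<bar>pb - pa\<bar> / 2 \<le> zz"
  using assms by (cases "pb \<le> pa") (auto simp: abs_if field_simps)

lemma key:
  fixes v :: "nat \<Rightarrow> 'a::euclidean_space"
  assumes hem: "not_in_closed_hemisphere N v" and gp: "general_position N v"
    and unit: "\<forall>j<N. norm (v j) = 1"
  shows "\<exists>\<kappa>>0. \<forall>P\<in>polytope_class N v. outer_radius P \<le> 0 \<or> inner_radius P \<ge> \<kappa> * outer_radius P"
proof -
  obtain \<delta> where \<delta>: "\<delta> > 0" "\<And>u I. norm u = 1 \<Longrightarrow> I \<subseteq> {..<N} \<Longrightarrow> card I = DIM('a) \<Longrightarrow> 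
       (\<exists>j\<in>I. \<bar>v j \<bullet> u\<bar> \<ge> \<delta>)"
    using delta_exists[OF gp] by blast
  obtain M where M: "M \<ge> 1" "\<And>J. J \<subseteq> {..<N} \<Longrightarrow> card J < DIM('a) \<Longrightarrow>
            (\<exists>w. norm w \<le> M \<and> (\<forall>j\<in>J. w \<bullet> v j = -1))"
    using M_exists[OF gp N_ge[OF hem]] by blast
  define \<kappa> where "\<kappa> = \<delta> / (8 * M)"
  have "\<kappa> > 0" using \<delta> M by (simp add: \<kappa>_def)
  moreover have "outer_radius P \<le> 0 \<or> inner_radius P \<ge> \<kappa> * outer_radius P"
    if PC: "P \<in> polytope_class N v" for P
  proof (cases "outer_radius P \<le> 0")
    case True thus ?thesis by simp
  next
    case False
    hence Rpos: "outer_radius P > 0" by simp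
    define R where "R = outer_radius P"
    obtain z where Pz: "P = {x. \<forall>j<N. x \<bullet> v j \<le> z j}" and intP: "interior P \<noteq> {}"
      using PC unfolding polytope_class_def by blast
    obtain a where aP: "a \<in> P" using intP interior_subset by blast
    have bddP: "bounded P" unfolding Pz by (rule poly_bounded[OF hem])
    have "\<exists>b\<in>P. dist a b > R / 2"
    proof (rule ccontr)
      assume "\<not> ?thesis"
      hence "P \<subseteq> cball a (R/2)" by (auto simp: not_less)
      moreover have "bdd_below {r. \<exists>c. P \<subseteq> cball c r}"
      proof (rule bdd_belowI[of _ 0])
        fix r assume "r \<in> {r. \<exists>c. P \<subseteq> cball c r}"
        then obtain c where "P \<subseteq> cball c r" by blast
        hence "dist c a \<le> r" using aP by auto
        thus "0 \<le> r" using zero_le_dist[of c a] by linarith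
      qed
      ultimately have "R \<le> R / 2" unfolding R_def outer_radius_def
        by (intro cInf_lower) auto
      thus False using Rpos R_def by simp
    qed
    then obtain b where bP: "b \<in> P" and ab: "dist a b > R / 2" by blast
    define D where "D = norm (b - a)"
    have DR: "D > R / 2" using ab by (simp add: D_def dist_norm norm_minus_commute)
    have Dpos: "D > 0" using DR Rpos R_def by simp
    define u where "u = (1 / D) *\<^sub>R (b - a)"
    have nu: "norm u = 1" using Dpos by (simp add: u_def D_def)
    define m where "m = (1/2) *\<^sub>R (a + b)"
    have slack: "m \<bullet> v j + D / 2 * \<bar>v j \<bullet> u\<bar> \<le> z j" if j: "j < N" for j
    proof -
      have za: "a \<bullet> v j \<le> z j" and zb: "b \<bullet> v j \<le> z j" using aP bP j Pz by auto
      have mv: "m \<bullet> v j = (a \<bullet> v j + b \<bullet> v j) / 2" by (simp add: m_def inner_add_left)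
      have "D * (v j \<bullet> u) = b \<bullet> v j - a \<bullet> v j" using Dpos
        by (simp add: u_def inner_diff_right inner_commute)
      hence "\<bar>D * (v j \<bullet> u)\<bar> = \<bar>b \<bullet> v j - a \<bullet> v j\<bar>" by simp
      hence "D / 2 * \<bar>v j \<bullet> u\<bar> = \<bar>b \<bullet> v j - a \<bullet> v j\<bar> / 2"
        using Dpos by (simp add: abs_mult)
      moreover have "m \<bullet> v j + \<bar>b \<bullet> v j - a \<bullet> v j\<bar> / 2 \<le> z j"
        by (rule aux_mid[OF mv za zb])
      ultimately show ?thesis by linarith
    qed
    define J where "J = {j. j < N \<and> \<bar>v j \<bullet> u\<bar> < \<delta>}"
    have JN: "J \<subseteq> {..<N}" by (auto simp: J_def)
    have cJ: "card J < DIM('a)"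
    proof (rule ccontr)
      assume "\<not> ?thesis"
      then obtain I where I: "I \<subseteq> J" "card I = DIM('a)"
        using obtain_subset_with_card_n[of "DIM('a)" J] by (metis not_less)
      then obtain j where "j \<in> I" "\<bar>v j \<bullet> u\<bar> \<ge> \<delta>" using \<delta>(2)[OF nu, of I] JN by blast
      thus False using I J_def by auto
    qed
    obtain w where w: "norm w \<le> M" "\<forall>j\<in>J. w \<bullet> v j = -1" using M(2)[OF JN cJ] by blast
    define t where "t = D * \<delta> / (4 * M)"
    have tpos: "t > 0" using Dpos \<delta> M by (simp add: t_def)
    have t_le: "t \<le> D * \<delta> / 4" unfolding t_def using Dpos \<delta> M
      by (simp add: divide_simps)
    have tM: "t * M = D * \<delta> / 4" unfolding t_def using M by simp
    define c where "c = m + t *\<^sub>R w"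
    have cv: "c \<bullet> v j \<le> z j - t" if j: "j < N" for j
    proof (cases "j \<in> J")
      case True
      hence "c \<bullet> v j = m \<bullet> v j - t" using w by (simp add: c_def inner_add_left)
      moreover have "m \<bullet> v j \<le> z j" using slack[OF j] Dpos
        by (smt (verit) abs_ge_zero mult_nonneg_nonneg divide_nonneg_pos)
      ultimately show ?thesis by simp
    next
      case False
      hence ge: "\<bar>v j \<bullet> u\<bar> \<ge> \<delta>" using j by (auto simp: J_def)
      have "w \<bullet> v j \<le> norm w * norm (v j)" by (rule real_inner_class.Cauchy_Schwarz_ineq2[THEN order_trans[OF abs_ge_self]])
      hence wv: "w \<bullet> v j \<le> M" using w(1) unit j by simp
      have "c \<bullet> v j = m \<bullet> v j + t * (w \<bullet> v j)" by (simp add: c_def inner_add_left)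
      also have "\<dots> \<le> m \<bullet> v j + t * M" using wv tpos by (simp add: mult_left_mono)
      also have "\<dots> = m \<bullet> v j + D * \<delta> / 4" using tM by simp
      also have "\<dots> \<le> z j - D * \<delta> / 4"
      proof -
        have "D / 2 * \<delta> \<le> D / 2 * \<bar>v j \<bullet> u\<bar>" using ge Dpos by (simp add: mult_left_mono)
        thus ?thesis using slack[OF j] by linarith
      qed
      also have "\<dots> \<le> z j - t" using t_le by simp
      finally show ?thesis .
    qed
    have "cball c t \<subseteq> P"
    proof
      fix x assume x: "x \<in> cball c t"
      have "x \<bullet> v j \<le> z j" if j: "j < N" for j
      proof -
        have "(x - c) \<bullet> v j \<le> norm (x - c) * norm (v j)"
          by (rule real_inner_class.Cauchy_Schwarz_ineq2[THEN order_trans[OF abs_ge_self]])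
        also have "\<dots> \<le> t" using x unit j by (simp add: dist_norm norm_minus_commute)
        finally have "(x - c) \<bullet> v j \<le> t" .
        moreover have "x \<bullet> v j = c \<bullet> v j + (x - c) \<bullet> v j" by (simp add: inner_diff_left)
        ultimately show ?thesis using cv[OF j] by linarith
      qed
      thus "x \<in> P" unfolding Pz by blast
    qed
    hence "t \<le> inner_radius P" unfolding inner_radius_def
      using tpos inner_bdd[OF bddP] by (intro cSup_upper) auto
    moreover have "\<kappa> * outer_radius P \<le> t"
    proof -
      have "\<kappa> * R = (R / 2) * \<delta> / (4 * M)" by (simp add: \<kappa>_def)
      also have "\<dots> \<le> D * \<delta> / (4 * M)" using DR \<delta> M
        by (intro divide_right_mono mult_right_mono) auto
      finally show ?thesis by (simp add: R_def t_def)
    qed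
    ultimately show ?thesis by linarith
  qed
  ultimately show ?thesis by blast
qed


theorem lemma3p4:
  fixes v :: "nat \<Rightarrow> 'a::euclidean_space" and N :: nat
    and P :: "nat \<Rightarrow> 'a set"
  assumes "DIM('a) \<ge> 2"
    and "\<forall>j<N. norm (v j) = 1"
    and "not_in_closed_hemisphere N v"
    and "general_position N v"
    and "\<forall>i. P i \<in> polytope_class N v"
    and "\<not> bdd_above (range (\<lambda>i. outer_radius (P i)))"
  shows "\<not> bdd_above (range (\<lambda>i. inner_radius (P i)))"
proof
  assume "bdd_above (range (\<lambda>i. inner_radius (P i)))"
  then obtain B where B: "\<And>i. inner_radius (P i) \<le> B"
    unfolding bdd_above_def by auto
  obtain \<kappa> where k: "\<kappa> > 0" "\<forall>Q\<in>polytope_class N v. outer_radius Q \<le> 0 \<or> inner_radius Q \<ge> \<kappa> * outer_radius Q"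
    using key[OF assms(3,4,2)] by blast
  have "outer_radius (P i) \<le> max 0 (B / \<kappa>)" for i
  proof -
    have "outer_radius (P i) \<le> 0 \<or> \<kappa> * outer_radius (P i) \<le> B"
      using k(2) assms(5) B[of i] by force
    moreover have "\<kappa> * outer_radius (P i) \<le> B \<Longrightarrow> outer_radius (P i) \<le> B / \<kappa>"
      using k(1) by (simp add: pos_le_divide_eq mult.commute)
    ultimately show ?thesis by linarith
  qed
  hence "bdd_above (range (\<lambda>i. outer_radius (P i)))"
    by (intro bdd_aboveI[of _ "max 0 (B / \<kappa>)"]) auto
  thus False using assms(6) by contradiction
qed

end
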